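(* Let $n\ge2$. The permutation representation $\rho_2^{\mathbb{C}}$ of $S_n$ does not unite conjugacy classes: if $\sigma,\tau\in S_n$ and $\rho_2^{\mathbb{C}}(\sigma)$ is similar to $\rho_2^{\mathbb{C}}(\tau)$ in $GL(n(n-1),\mathbb{C})$, then $\sigma$ and $\tau$ are conjugate in $S_n$.
   Context: For $1\le k\le n$, $\rho_k^{\mathbb{F}}$ denotes the permutation representation over the field $\mathbb{F}$ of $S_n$ arising from its action on ordered $k$-tuples $(i_1,\dots,i_k)$ of distinct elements of $\{1,\dots,n\}$, given by $\pi\cdot(i_1,\dots,i_k)=(\pi(i_1),\dots,\pi(i_k))$. A representation $T$ of $G$ unites conjugacy classes if there are non-conjugate $\sigma,\tau\in G$ with $T(\sigma),T(\tau)$ similar matrices. *)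

theory Defs
  imports "HOL-Combinatorics.Permutations" "Jordan_Normal_Form.Matrix"
begin

text \<open>Ordered pairs (i,j) of distinct elements of {1..n}, enumerated in a fixed order;
  they index the standard basis of the permutation module of rho_2.\<close>
definition pairs2 :: "nat \<Rightarrow> (nat \<times> nat) list" where
  "pairs2 n = [(i, j). i \<leftarrow> [1..<Suc n], j \<leftarrow> [1..<Suc n], i \<noteq> j]"

definition rho2 :: "nat \<Rightarrow> (nat \<Rightarrow> nat) \<Rightarrow> complex mat" where
  "rho2 n \<sigma> = mat (n * (n - 1)) (n * (n - 1))
     (\<lambda>(r, c). if pairs2 n ! r = (\<sigma> (fst (pairs2 n ! c)), \<sigma> (snd (pairs2 n ! c)))
               then 1 else 0)"

definition conj_Sn :: "nat \<Rightarrow> (nat \<Rightarrow> nat) \<Rightarrow> (nat \<Rightarrow> nat) \<Rightarrow> bool" where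
  "conj_Sn n \<sigma> \<tau> = (\<exists>\<pi>. \<pi> permutes {1..n} \<and> \<tau> = \<pi> \<circ> \<sigma> \<circ> Hilbert_Choice.inv \<pi>)"

end

theory Submission
  imports Defs "HOL-Combinatorics.Cycles"
begin


definition mtr :: "complex mat \<Rightarrow> complex" where
  "mtr A = (\<Sum>i<dim_row A. A $$ (i,i))"

lemma mtr_comm:
  assumes "A \<in> carrier_mat n m" "B \<in> carrier_mat m n"
  shows "mtr (A * B) = mtr (B * A)"
proof -
  have "mtr (A * B) = (\<Sum>i<n. \<Sum>j<m. A $$ (i,j) * B $$ (j,i))"
    using assms unfolding mtr_def by (auto simp: scalar_prod_def row_def col_def intro!: sum.cong)
  also have "\<dots> = (\<Sum>j<m. \<Sum>i<n. B $$ (j,i) * A $$ (i,j))"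
    by (subst sum.swap) (simp add: mult.commute)
  also have "\<dots> = mtr (B * A)"
    using assms unfolding mtr_def by (auto simp: scalar_prod_def row_def col_def intro!: sum.cong)
  finally show ?thesis .
qed

lemma mtr_sim:
  assumes "similar_mat A B"
  shows "mtr (A ^\<^sub>m k) = mtr (B ^\<^sub>m k)"
proof -
  from assms obtain P Q where w: "similar_mat_wit A B P Q" unfolding similar_mat_def by blast
  have w2: "similar_mat_wit (A ^\<^sub>m k) (B ^\<^sub>m k) P Q" by (rule similar_mat_wit_pow[OF w])
  define N where "N = dim_row (A ^\<^sub>m k)"
  note d = similar_mat_witD[OF N_def w2]
  have "mtr (A ^\<^sub>m k) = mtr (P * (B ^\<^sub>m k * Q))"
    using d by (simp add: assoc_mult_mat[of P N N _ N _ N])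
  also have "\<dots> = mtr ((B ^\<^sub>m k * Q) * P)"
    by (rule mtr_comm[of _ N N]) (use d in auto)
  also have "\<dots> = mtr (B ^\<^sub>m k)"
    using d by (simp add: assoc_mult_mat[of _ N N _ N _ N] right_mult_one_mat)
  finally show ?thesis .
qed

definition pmat :: "'a list \<Rightarrow> ('a \<Rightarrow> 'a) \<Rightarrow> complex mat" where
  "pmat xs f = mat (length xs) (length xs) (\<lambda>(r,c). if xs ! r = f (xs ! c) then 1 else 0)"

lemma pmat_mult:
  assumes "distinct xs" "\<And>x. x \<in> set xs \<Longrightarrow> g x \<in> set xs"
  shows "pmat xs f * pmat xs g = pmat xs (f \<circ> g)"
proof (rule eq_matI)
  fix r c assume r: "r < dim_row (pmat xs (f \<circ> g))" and c: "c < dim_col (pmat xs (f \<circ> g))"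
  let ?L = "length xs"
  have rL: "r < ?L" and cL: "c < ?L" using r c by (auto simp: pmat_def)
  have "g (xs ! c) \<in> set xs" using assms(2) cL by simp
  then obtain m0 where m0: "m0 < ?L" "xs ! m0 = g (xs ! c)" by (metis in_set_conv_nth)
  have uq: "xs ! m = g (xs ! c) \<longleftrightarrow> m = m0" if "m < ?L" for m
    using m0 that assms(1) nth_eq_iff_index_eq by metis
  have "(pmat xs f * pmat xs g) $$ (r, c) =
     (\<Sum>m<?L. (if xs ! r = f (xs ! m) then 1 else 0) * (if xs ! m = g (xs ! c) then 1 else 0))"
    using rL cL by (auto simp: pmat_def scalar_prod_def row_def col_def intro!: sum.cong)
  also have "\<dots> = (\<Sum>m<?L. if m = m0 then (if xs ! r = f (xs ! m0) then 1 else 0) else 0)"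
    by (rule sum.cong) (auto simp: uq)
  also have "\<dots> = (if xs ! r = f (xs ! m0) then 1 else 0)" using m0 by simp
  also have "\<dots> = pmat xs (f \<circ> g) $$ (r, c)" using rL cL m0 by (simp add: pmat_def)
  finally show "(pmat xs f * pmat xs g) $$ (r, c) = pmat xs (f \<circ> g) $$ (r, c)" .
qed (auto simp: pmat_def)



lemma pmat_id: "distinct xs \<Longrightarrow> pmat xs id = 1\<^sub>m (length xs)"
  by (rule eq_matI) (auto simp: pmat_def nth_eq_iff_index_eq)

lemma pmat_pow:
  assumes "distinct xs" "\<And>x. x \<in> set xs \<Longrightarrow> f x \<in> set xs"
  shows "pmat xs f ^\<^sub>m k = pmat xs (f ^^ k)"
proof (induction k)
  case 0 then show ?case using pmat_id[OF assms(1)] by (simp add: pmat_def)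
next
  case (Suc k)
  have "pmat xs f ^\<^sub>m Suc k = pmat xs (f^^k) * pmat xs f" using Suc by simp
  also have "\<dots> = pmat xs (f^^k \<circ> f)" by (rule pmat_mult[OF assms(1,2)])
  also have "f^^k \<circ> f = f^^Suc k" by (rule funpow_Suc_right[symmetric])
  finally show ?case .
qed

lemma mtr_pmat:
  assumes "distinct xs"
  shows "mtr (pmat xs f) = of_nat (card {x \<in> set xs. x = f x})"
proof -
  have "mtr (pmat xs f) = (\<Sum>i<length xs. (\<lambda>x. if x = f x then 1 else 0) (xs ! i))"
    by (simp add: mtr_def pmat_def)
  also have "\<dots> = (\<Sum>x\<in>set xs. if x = f x then 1 else 0)"
  proof (rule sum.reindex_bij_betw)
    show "bij_betw ((!) xs) {..<length xs} (set xs)"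
      using assms by (auto simp: bij_betw_def inj_on_nth in_set_conv_nth)
  qed
  also have "\<dots> = of_nat (card {x \<in> set xs. x = f x})"
    by (simp add: sum.If_cases Int_def conj_commute)
  finally show ?thesis .
qed

definition app2 :: "(nat \<Rightarrow> nat) \<Rightarrow> nat \<times> nat \<Rightarrow> nat \<times> nat" where
  "app2 \<sigma> p = (\<sigma> (fst p), \<sigma> (snd p))"

lemma set_pairs2: "set (pairs2 n) = {(i,j). i \<in> {1..n} \<and> j \<in> {1..n} \<and> i \<noteq> j}"
  by (auto simp: pairs2_def)

lemma distinct_row: "distinct ys \<Longrightarrow> distinct [(a,j). j \<leftarrow> ys, a \<noteq> j]"
  by (induction ys) auto

lemma distinct_pl: "distinct xs \<Longrightarrow> distinct ys \<Longrightarrow> distinct [(i,j). i \<leftarrow> xs, j \<leftarrow> ys, i \<noteq> j]"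
proof (induction xs)
  case (Cons a xs)
  then show ?case using distinct_row[of ys a] by auto
qed simp

lemma distinct_pairs2: "distinct (pairs2 n)"
  unfolding pairs2_def by (rule distinct_pl) auto

lemma card_offdiag:
  assumes "finite F"
  shows "card {(i,j). i \<in> F \<and> j \<in> F \<and> i \<noteq> j} = card F * card F - card F"
proof -
  have e: "{(i,j). i \<in> F \<and> j \<in> F \<and> i \<noteq> j} = F \<times> F - (\<lambda>x. (x,x)) ` F" by auto
  have c: "card ((\<lambda>x. (x,x)) ` F) = card F" by (rule card_image) (auto simp: inj_on_def)
  have sb: "(\<lambda>x. (x,x)) ` F \<subseteq> F \<times> F" by auto
  have fi: "finite ((\<lambda>x. (x,x)) ` F)" using assms by simp
  have "card (F \<times> F - (\<lambda>x. (x,x)) ` F) = card (F \<times> F) - card ((\<lambda>x. (x,x)) ` F)"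
    by (rule card_Diff_subset[OF fi sb])
  then have "card (F \<times> F - (\<lambda>x. (x,x)) ` F) = card (F \<times> F) - card F" using c by simp
  then show ?thesis unfolding e by (simp add: card_cartesian_product)
qed

lemma length_pairs2: "length (pairs2 n) = n * (n - 1)"
proof -
  have "length (pairs2 n) = card (set (pairs2 n))" using distinct_pairs2 distinct_card by metis
  also have "\<dots> = n * n - n" unfolding set_pairs2 using card_offdiag[of "{1..n}"] by simp
  finally show ?thesis by (metis diff_mult_distrib2 mult.right_neutral)
qed

lemma rho2_pmat: "rho2 n \<sigma> = pmat (pairs2 n) (app2 \<sigma>)"
  unfolding rho2_def pmat_def length_pairs2 app2_def by simp

lemma app2_pow: "app2 \<sigma> ^^ k = app2 (\<sigma> ^^ k)"
proof (induction k)
  case 0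
  show ?case by (simp add: app2_def fun_eq_iff)
next
  case (Suc k)
  have "app2 \<sigma> ^^ Suc k = app2 \<sigma> \<circ> (app2 \<sigma> ^^ k)" by simp
  also have "\<dots> = app2 \<sigma> \<circ> app2 (\<sigma> ^^ k)" by (simp only: Suc.IH)
  also have "\<dots> = app2 (\<sigma> ^^ Suc k)" by (simp add: app2_def fun_eq_iff)
  finally show ?case .
qed

lemma rho2_pow:
  assumes s: "\<sigma> permutes {1..n}"
  shows "rho2 n \<sigma> ^\<^sub>m k = rho2 n (\<sigma> ^^ k)"
  unfolding rho2_pmat app2_pow[symmetric]
proof (rule pmat_pow[OF distinct_pairs2])
  fix x assume "x \<in> set (pairs2 n)"
  then obtain i j where x: "x = (i,j)" and i: "i \<in> {1..n}" and j: "j \<in> {1..n}" and ij: "i \<noteq> j"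
    unfolding set_pairs2 by blast
  have "\<sigma> i \<in> {1..n}" "\<sigma> j \<in> {1..n}" using i j permutes_in_image[OF s] by simp_all
  moreover have "\<sigma> i \<noteq> \<sigma> j" using ij permutes_inj[OF s] by (simp add: inj_eq)
  ultimately show "app2 \<sigma> x \<in> set (pairs2 n)" unfolding x set_pairs2 app2_def by simp
qed

lemma mtr_rho2:
  "mtr (rho2 n \<pi>) = of_nat (card {x\<in>{1..n}. \<pi> x = x} * card {x\<in>{1..n}. \<pi> x = x} - card {x\<in>{1..n}. \<pi> x = x})"
proof -
  define F where "F = {x\<in>{1..n}. \<pi> x = x}"
  have fin: "finite F" unfolding F_def by simp
  have e: "{x \<in> set (pairs2 n). x = app2 \<pi> x} = {(i,j). i \<in> F \<and> j \<in> F \<and> i \<noteq> j}"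
    unfolding F_def set_pairs2 app2_def by force
  have "mtr (rho2 n \<pi>) = of_nat (card {x \<in> set (pairs2 n). x = app2 \<pi> x})"
    unfolding rho2_pmat by (rule mtr_pmat[OF distinct_pairs2])
  also have "\<dots> = of_nat (card F * card F - card F)" unfolding e by (simp only: card_offdiag[OF fin])
  finally show ?thesis unfolding F_def .
qed



abbreviation per where "per p x \<equiv> least_power p x"

lemma per_pos: "permutation p \<Longrightarrow> per p x > 0"
  by (rule least_power_of_permutation(2))

lemma pw_le:
  assumes "permutation p" "i \<le> j"
  shows "(p^^i) x = (p^^j) x \<longleftrightarrow> i mod per p x = j mod per p x"
proof
  assume h: "(p^^i) x = (p^^j) x"
  have "(p^^(j-i)) x = x" by (rule funpow_diff[OF bij_is_inj[OF permutation_bijective[OF assms(1)]] assms(2) h])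
  then have "per p x dvd j - i" using least_power_dvd[OF assms(1)] by blast
  then have "j mod per p x = i mod per p x" using mod_eq_dvd_iff_nat[OF assms(2)] by blast
  then show "i mod per p x = j mod per p x" by simp
next
  assume "i mod per p x = j mod per p x"
  then have "j mod per p x = i mod per p x" by simp
  then have "per p x dvd j - i" using mod_eq_dvd_iff_nat[OF assms(2)] by blast
  then have e: "(p^^(j-i)) x = x" using least_power_dvd[OF assms(1)] by blast
  have "(p^^j) x = (p^^i) ((p^^(j-i)) x)"
  proof -
    have "j = i + (j - i)" using assms(2) by simp
    then have "(p^^j) x = (p^^(i + (j - i))) x" by simp
    also have "\<dots> = (p^^i) ((p^^(j-i)) x)" by (simp add: funpow_add)
    finally show ?thesis .
  qed
  then show "(p^^i) x = (p^^j) x" using e by simp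
qed

lemma pw_eq:
  assumes "permutation p"
  shows "(p^^i) x = (p^^j) x \<longleftrightarrow> i mod per p x = j mod per p x"
  using pw_le[OF assms, of i j x] pw_le[OF assms, of j i x] by (cases "i \<le> j") auto

lemma pw_comm: "(p^^m) ((p^^i) x) = (p^^i) ((p^^m) x)"
proof -
  have "(p^^m) ((p^^i) x) = (p^^(m+i)) x" by (simp add: funpow_add)
  also have "\<dots> = (p^^(i+m)) x" by (simp add: add.commute)
  also have "\<dots> = (p^^i) ((p^^m) x)" by (simp add: funpow_add)
  finally show ?thesis .
qed

lemma per_iter:
  assumes "permutation p"
  shows "per p ((p^^i) x) = per p x"
proof -
  have inj: "inj (p^^i)" using permutation_bijective[OF permutation_funpow[OF assms]] bij_is_inj by blast
  have "(p^^m) ((p^^i) x) = (p^^i) x \<longleftrightarrow> (p^^m) x = x" for m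
    unfolding pw_comm using inj by (simp add: inj_eq)
  then have d: "per p ((p^^i) x) dvd m \<longleftrightarrow> per p x dvd m" for m
    using least_power_dvd[OF assms] by simp
  have "per p ((p^^i) x) dvd per p x" using d[of "per p x"] by simp
  moreover have "per p x dvd per p ((p^^i) x)" using d[of "per p ((p^^i) x)"] by simp
  ultimately show ?thesis by (rule dvd_antisym)
qed

definition orb :: "('a \<Rightarrow> 'a) \<Rightarrow> 'a \<Rightarrow> 'a set" where
  "orb p x = (\<lambda>i. (p^^i) x) ` {..<per p x}"

lemma orb_iff:
  assumes "permutation p"
  shows "y \<in> orb p x \<longleftrightarrow> (\<exists>i. y = (p^^i) x)"
proof
  assume "\<exists>i. y = (p^^i) x"
  then obtain i where i: "y = (p^^i) x" by blast
  have "(p^^i) x = (p^^(i mod per p x)) x" using pw_eq[OF assms] by simp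
  moreover have "i mod per p x < per p x" using per_pos[OF assms] by simp
  ultimately have "(p^^i) x = (\<lambda>j. (p^^j) x) (i mod per p x)" "i mod per p x \<in> {..<per p x}" by simp_all
  then show "y \<in> orb p x" unfolding orb_def i by (rule image_eqI)
qed (auto simp: orb_def)

lemma self_orb:
  assumes "permutation p" shows "x \<in> orb p x"
proof -
  have "x = (\<lambda>j. (p^^j) x) 0" "(0::nat) \<in> {..<per p x}" using per_pos[OF assms] by simp_all
  then show ?thesis unfolding orb_def by (rule image_eqI)
qed

lemma card_orb:
  assumes "permutation p"
  shows "card (orb p x) = per p x"
proof -
  have "inj_on (\<lambda>i. (p^^i) x) {..<per p x}"
    unfolding inj_on_def using pw_eq[OF assms] by auto
  then show ?thesis unfolding orb_def by (simp add: card_image)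
qed

lemma finite_orb: "finite (orb p x)"
  unfolding orb_def by simp

lemma per_orb:
  assumes "permutation p" "y \<in> orb p x"
  shows "per p y = per p x"
proof -
  obtain i where "y = (p^^i) x" using orb_iff[OF assms(1)] assms(2) by blast
  then show ?thesis using per_iter[OF assms(1)] by simp
qed

lemma orb_same:
  assumes "permutation p" "y \<in> orb p x"
  shows "orb p y = orb p x"
proof -
  obtain i where i: "y = (p^^i) x" using orb_iff[OF assms(1)] assms(2) by blast
  define k where "k = per p x"
  have k: "k > 0" unfolding k_def using per_pos[OF assms(1)] .
  have "per p x dvd k*i" unfolding k_def by simp
  then have e0: "(p^^(k*i)) x = x" using least_power_dvd[OF assms(1)] by blast
  have "i \<le> k*i" using k by simp
  then have e1: "k*i - i + i = k*i" by simp
  have "(p^^(k*i - i)) ((p^^i) x) = (p^^(k*i - i + i)) x" by (simp add: funpow_add)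
  then have "(p^^(k*i - i)) y = (p^^(k*i)) x"
    unfolding i e1 .
  then have x: "x = (p^^(k*i - i)) y" using e0 by simp
  show ?thesis
  proof
    show "orb p y \<subseteq> orb p x"
    proof
      fix z assume "z \<in> orb p y"
      then obtain j where "z = (p^^j) y" using orb_iff[OF assms(1)] by blast
      then have "z = (p^^(j+i)) x" unfolding i by (simp add: funpow_add)
      then show "z \<in> orb p x" using orb_iff[OF assms(1)] by blast
    qed
    show "orb p x \<subseteq> orb p y"
    proof
      fix z assume "z \<in> orb p x"
      then obtain j where "z = (p^^j) x" using orb_iff[OF assms(1)] by blast
      then have "z = (p^^j) ((p^^(k*i - i)) y)" using x by simp
      then have "z = (p^^(j+(k*i - i))) y" by (simp add: funpow_add)
      then show "z \<in> orb p y" using orb_iff[OF assms(1)] by blast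
    qed
  qed
qed

lemma orb_disj:
  assumes "permutation p" "orb p x \<inter> orb p y \<noteq> {}"
  shows "orb p x = orb p y"
proof -
  obtain z where z1: "z \<in> orb p x" and z2: "z \<in> orb p y" using assms(2) by blast
  show ?thesis using orb_same[OF assms(1) z1] orb_same[OF assms(1) z2] by simp
qed

lemma orb_step:
  assumes "permutation p"
  shows "p z \<in> orb p x \<longleftrightarrow> z \<in> orb p x"
proof
  assume "z \<in> orb p x"
  then obtain i where "z = (p^^i) x" using orb_iff[OF assms] by blast
  then have "p z = (p^^Suc i) x" by simp
  then show "p z \<in> orb p x" using orb_iff[OF assms] by blast
next
  assume h: "p z \<in> orb p x"
  have "(p^^(per p z - 1)) (p z) = (p^^(per p z)) z"
  proof -
    have "per p z = Suc (per p z - 1)" using per_pos[OF assms, of z] by simp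
    then have "(p^^(per p z)) z = (p^^(Suc (per p z - 1))) z" by simp
    also have "\<dots> = (p^^(per p z - 1)) (p z)" by (simp only: funpow_Suc_right o_apply)
    finally show ?thesis by simp
  qed
  also have "\<dots> = z" using least_power_of_permutation(1)[OF assms] by simp
  finally have "z = (p^^(per p z - 1)) (p z)" by simp
  then have "z \<in> orb p (p z)" using orb_iff[OF assms] by blast
  then show "z \<in> orb p x" using orb_same[OF assms h] by simp
qed

lemma orb_sub:
  assumes "permutation p" "\<forall>z. z \<in> S \<longleftrightarrow> p z \<in> S" "x \<in> S"
  shows "orb p x \<subseteq> S"
proof -
  have "(p^^i) x \<in> S" for i by (induction i) (use assms in auto)
  then show ?thesis using orb_iff[OF assms(1)] by auto
qed



lemma per_dvd_card:
  assumes p: "permutation p" and fin: "finite S" and inv: "\<forall>z. z \<in> S \<longleftrightarrow> p z \<in> S"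
  shows "k dvd card {x\<in>S. per p x = k}"
proof -
  define P where "P = {x\<in>S. per p x = k}"
  define C where "C = orb p ` P"
  have U: "\<Union>C = P"
  proof
    show "\<Union>C \<subseteq> P"
    proof
      fix y assume "y \<in> \<Union>C"
      then obtain x where x: "x \<in> P" "y \<in> orb p x" unfolding C_def by blast
      then show "y \<in> P" using orb_sub[OF p inv] per_orb[OF p] unfolding P_def by blast
    qed
    show "P \<subseteq> \<Union>C" unfolding C_def using self_orb[OF p] by blast
  qed
  have finP: "finite P" unfolding P_def using fin by simp
  have "k * card C = card (\<Union>C)"
  proof (rule card_partition)
    show "finite C" unfolding C_def using finP by simp
    show "finite (\<Union>C)" using U finP by simp
    show "card c = k" if "c \<in> C" for c using that unfolding C_def P_def using card_orb[OF p] by auto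
    show "c1 \<inter> c2 = {}" if "c1 \<in> C" "c2 \<in> C" "c1 \<noteq> c2" for c1 c2
      using that unfolding C_def using orb_disj[OF p] by blast
  qed
  then show ?thesis using U unfolding P_def by (metis dvd_triv_left)
qed

lemma fix_count:
  assumes p: "permutation p" and fin: "finite S" and k: "k > 0"
  shows "card {x\<in>S. (p^^k) x = x} = (\<Sum>d\<in>{d. d dvd k}. card {x\<in>S. per p x = d})"
proof -
  have e: "{x\<in>S. (p^^k) x = x} = (\<Union>d\<in>{d. d dvd k}. {x\<in>S. per p x = d})"
    using least_power_dvd[OF p] by auto
  have fd: "finite {d. d dvd k}" using k by simp
  show ?thesis unfolding e
    by (rule card_UN_disjoint[OF fd]) (use fin in auto)
qed



lemma count_remove:
  assumes p: "permutation p" and fin: "finite A" and sub: "orb p x \<subseteq> A"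
  shows "card {z\<in>A - orb p x. per p z = j} = card {z\<in>A. per p z = j} - (if j = per p x then per p x else 0)"
proof -
  have e: "{z\<in>A - orb p x. per p z = j} = {z\<in>A. per p z = j} - ({z\<in>A. per p z = j} \<inter> orb p x)" by blast
  have i: "{z\<in>A. per p z = j} \<inter> orb p x = (if j = per p x then orb p x else {})"
    using sub per_orb[OF p] by auto
  show ?thesis
  proof (cases "j = per p x")
    case True
    have sub2: "orb p x \<subseteq> {z\<in>A. per p z = j}" using sub per_orb[OF p] True by auto
    have "card ({z\<in>A. per p z = j} - orb p x) = card {z\<in>A. per p z = j} - card (orb p x)"
      by (rule card_Diff_subset[OF finite_orb sub2])
    then show ?thesis unfolding e i using True card_orb[OF p, of x] by simp
  next
    case False
    then show ?thesis unfolding e i by simp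
  qed
qed

lemma conj_build:
  assumes p: "permutation p" and q: "permutation q"
  shows "finite A \<Longrightarrow> finite B \<Longrightarrow> (\<forall>z. z\<in>A \<longleftrightarrow> p z \<in> A) \<Longrightarrow> (\<forall>z. z\<in>B \<longleftrightarrow> q z \<in> B) \<Longrightarrow>
    (\<forall>k. card {x\<in>A. per p x = k} = card {y\<in>B. per q y = k}) \<Longrightarrow>
    \<exists>h. bij_betw h A B \<and> (\<forall>x\<in>A. h (p x) = q (h x))"
proof (induction "card A" arbitrary: A B rule: less_induct)
  case (less A B)
  note finA = less.prems(1) and finB = less.prems(2) and invA = less.prems(3)
    and invB = less.prems(4) and cnt = less.prems(5)
  show ?case
  proof (cases "A = {}")
    case True
    have "B = {}"
    proof (rule ccontr)
      assume "B \<noteq> {}"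
      then obtain y where y: "y \<in> B" by blast
      have "card {y'\<in>B. per q y' = per q y} \<noteq> 0" using y finB by auto
      then show False using cnt[rule_format, of "per q y"] True by simp
    qed
    then show ?thesis using True by (auto simp: bij_betw_def)
  next
    case False
    then obtain x where x: "x \<in> A" by blast
    define k where "k = per p x"
    have "card {z\<in>A. per p z = k} \<noteq> 0" using x finA unfolding k_def by auto
    then have "card {y\<in>B. per q y = k} \<noteq> 0" using cnt by simp
    then obtain y where y: "y \<in> B" "per q y = k" by (metis (mono_tags, lifting) Collect_empty_eq card.empty)
    define Ox where "Ox = orb p x"
    define Oy where "Oy = orb q y"
    have OxA: "Ox \<subseteq> A" unfolding Ox_def by (rule orb_sub[OF p invA x])
    have OyB: "Oy \<subseteq> B" unfolding Oy_def by (rule orb_sub[OF q invB y(1)])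
    define A' where "A' = A - Ox"
    define B' where "B' = B - Oy"
    have invA': "\<forall>z. z\<in>A' \<longleftrightarrow> p z \<in> A'" unfolding A'_def Ox_def using invA orb_step[OF p] by blast
    have invB': "\<forall>z. z\<in>B' \<longleftrightarrow> q z \<in> B'" unfolding B'_def Oy_def using invB orb_step[OF q] by blast
    have cnt': "\<forall>j. card {z\<in>A'. per p z = j} = card {z\<in>B'. per q z = j}"
      unfolding A'_def B'_def Ox_def Oy_def
      using count_remove[OF p finA OxA[unfolded Ox_def]] count_remove[OF q finB OyB[unfolded Oy_def]] cnt y(2)
      unfolding k_def by simp
    have xO: "x \<in> Ox" unfolding Ox_def by (rule self_orb[OF p])
    have "A' \<subset> A" unfolding A'_def using x xO by blast
    then have lt: "card A' < card A" by (rule psubset_card_mono[OF finA])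
    obtain h' where h': "bij_betw h' A' B'" "\<forall>z\<in>A'. h' (p z) = q (h' z)"
      using less.hyps[OF lt _ _ invA' invB' cnt'] finA finB unfolding A'_def B'_def by auto
    define h where "h z = (if z \<in> Ox then (q^^(SOME i. (p^^i) x = z)) y else h' z)" for z
    have hpow: "h ((p^^i) x) = (q^^i) y" for i
    proof -
      have inO: "(p^^i) x \<in> Ox" unfolding Ox_def using orb_iff[OF p] by blast
      define i' where "i' = (SOME j. (p^^j) x = (p^^i) x)"
      have "(p^^i') x = (p^^i) x" unfolding i'_def by (rule someI[of _ i]) simp
      then have "i' mod k = i mod k" using pw_eq[OF p] unfolding k_def by blast
      then have "(q^^i') y = (q^^i) y" using pw_eq[OF q] y(2) by metis
      then show ?thesis unfolding h_def i'_def using inO by simp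
    qed
    have bO: "bij_betw h Ox Oy"
    proof -
      have Oxe: "Ox = (\<lambda>i. (p^^i) x) ` {..<k}" unfolding Ox_def orb_def k_def ..
      have Oye: "Oy = (\<lambda>i. (q^^i) y) ` {..<k}" unfolding Oy_def orb_def y(2) ..
      have "inj_on h Ox"
      proof (rule inj_onI)
        fix a b assume a: "a \<in> Ox" and b: "b \<in> Ox" and hab: "h a = h b"
        obtain i where i: "a = (p^^i) x" using a unfolding Oxe by blast
        obtain j where j: "b = (p^^j) x" using b unfolding Oxe by blast
        have "(q^^i) y = (q^^j) y" using hab hpow i j by simp
        then have "i mod k = j mod k" using pw_eq[OF q] y(2) by metis
        then show "a = b" using i j pw_eq[OF p] unfolding k_def by metis
      qed
      moreover have "h ` Ox = Oy" unfolding Oxe Oye image_image hpow ..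
      ultimately show ?thesis unfolding bij_betw_def by blast
    qed
    have bA': "bij_betw h A' B'"
      using h'(1) by (rule bij_betw_cong[THEN iffD1, rotated]) (auto simp: h_def A'_def)
    have "bij_betw h (Ox \<union> A') (Oy \<union> B')"
      by (rule bij_betw_combine[OF bO bA']) (auto simp: B'_def)
    moreover have "Ox \<union> A' = A" "Oy \<union> B' = B" using OxA OyB unfolding A'_def B'_def by auto
    ultimately have bij: "bij_betw h A B" by simp
    have comm: "h (p z) = q (h z)" if z: "z \<in> A" for z
    proof (cases "z \<in> Ox")
      case True
      then obtain i where i: "z = (p^^i) x" unfolding Ox_def using orb_iff[OF p] by blast
      have "h (p z) = h ((p^^Suc i) x)" using i by simp
      also have "\<dots> = (q^^Suc i) y" by (rule hpow)
      also have "\<dots> = q (h z)" using i hpow by simp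
      finally show ?thesis .
    next
      case False
      then have zA': "z \<in> A'" using z unfolding A'_def by blast
      then have "p z \<in> A'" using invA' by blast
      then have "h (p z) = h' (p z)" unfolding h_def A'_def by simp
      also have "\<dots> = q (h' z)" using h'(2) zA' by blast
      also have "\<dots> = q (h z)" using False unfolding h_def by simp
      finally show ?thesis .
    qed
    show ?thesis using bij comm by blast
  qed
qed



lemma sq_lt:
  assumes "(a::nat) < b" "b \<ge> 2"
  shows "a*a - a < b*b - b"
proof -
  have e1: "a*a - a = a*(a-1)" "b*b - b = b*(b-1)" by (simp_all add: diff_mult_distrib2)
  have "a - 1 \<le> b - 1" using assms by simp
  then have "a*(a-1) \<le> a*(b-1)" by (rule mult_le_mono2)
  also have "\<dots> < b*(b-1)" using assms by simp
  finally show ?thesis unfolding e1 .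
qed

lemma sq_eq:
  assumes "(a::nat)*a - a = b*b - b"
  shows "a = b \<or> (a \<le> 1 \<and> b \<le> 1)"
proof (rule ccontr)
  assume h: "\<not> (a = b \<or> (a \<le> 1 \<and> b \<le> 1))"
  show False
  proof (cases "a < b")
    case True
    then have "b \<ge> 2" using h by auto
    then show False using sq_lt[OF True] assms by simp
  next
    case False
    then have ba: "b < a" and a2: "a \<ge> 2" using h by auto
    show False using sq_lt[OF ba a2] assms by simp
  qed
qed

lemma dsplit:
  assumes "(k::nat) > 0"
  shows "(\<Sum>d\<in>{d. d dvd k}. f d) = f k + (\<Sum>d\<in>{d. d dvd k \<and> d < k}. (f d :: nat))"
proof -
  have e: "{d. d dvd k} = insert k {d. d dvd k \<and> d < k}"
    using assms dvd_imp_le by fastforce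
  have "finite {d. d dvd k \<and> d < k}" by simp
  then show ?thesis unfolding e by simp
qed

lemma dsplit1:
  assumes "(k::nat) \<ge> 2"
  shows "(\<Sum>d\<in>{d. d dvd k \<and> d < k}. f d) = f 1 + (\<Sum>d\<in>{d. d dvd k \<and> 1 < d \<and> d < k}. (f d :: nat))"
proof -
  have e: "{d. d dvd k \<and> d < k} = insert 1 {d. d dvd k \<and> 1 < d \<and> d < k}"
    using assms by (auto intro!: Nat.gr0I simp: le_less)
  have "finite {d. d dvd k \<and> 1 < d \<and> d < k}" by simp
  then show ?thesis unfolding e by simp
qed

lemma nt_bad:
  fixes p q Fp Fq :: "nat \<Rightarrow> nat"
  assumes eq: "\<forall>k>0. Fp k * Fp k - Fp k = Fq k * Fq k - Fq k"
    and Fp: "\<forall>k>0. Fp k = (\<Sum>d\<in>{d. d dvd k}. p d)"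
    and Fq: "\<forall>k>0. Fq k = (\<Sum>d\<in>{d. d dvd k}. q d)"
    and dp: "\<forall>k>0. k dvd p k" and dq: "\<forall>k>0. k dvd q k"
    and np: "\<exists>k>0. Fp k \<noteq> 0"
    and p1: "p 1 = 0" and q1: "q 1 = 1"
  shows False
proof -
  have claim: "2 \<le> k \<longrightarrow> p k = q k \<and> Fp k = 0" for k
  proof (induction k rule: less_induct)
    case (less k)
    show ?case
    proof
      assume k2: "2 \<le> k"
      then have k0: "k > 0" by simp
      define R where "R = (\<Sum>d\<in>{d. d dvd k \<and> 1 < d \<and> d < k}. p d)"
      have "(\<Sum>d\<in>{d. d dvd k \<and> 1 < d \<and> d < k}. q d) = R"
        unfolding R_def using less.IH by (intro sum.cong) auto
      then have Fq': "Fq k = q k + 1 + R" using Fq k0 dsplit[OF k0, of q] dsplit1[OF k2, of q] q1 by simp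
      have Fp': "Fp k = p k + R" using Fp k0 dsplit[OF k0, of p] dsplit1[OF k2, of p] p1 R_def by simp
      from sq_eq[OF eq[rule_format, OF k0]]
      show "p k = q k \<and> Fp k = 0"
      proof
        assume "Fp k = Fq k"
        then have "p k = q k + 1" using Fp' Fq' by simp
        then have "k dvd 1" using dp dq k0 by (metis dvd_add_right_iff)
        then show ?thesis using k2 by simp
      next
        assume h: "Fp k \<le> 1 \<and> Fq k \<le> 1"
        then have "q k = 0" "R = 0" using Fq' by auto
        moreover have "p k = 0"
        proof (rule ccontr)
          assume "p k \<noteq> 0"
          then have "k \<le> p k" using dp k0 by (simp add: dvd_imp_le)
          then show False using h Fp' k2 by simp
        qed
        ultimately show ?thesis using Fp' by simp
      qed
    qed
  qed
  obtain k where k: "k > 0" "Fp k \<noteq> 0" using np by blast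
  show False
  proof (cases "k = 1")
    case True
    then show False using k Fp p1 by simp
  next
    case False
    then show False using claim[of k] k by simp
  qed
qed

lemma nt:
  fixes p q Fp Fq :: "nat \<Rightarrow> nat"
  assumes eq: "\<forall>k>0. Fp k * Fp k - Fp k = Fq k * Fq k - Fq k"
    and Fp: "\<forall>k>0. Fp k = (\<Sum>d\<in>{d. d dvd k}. p d)"
    and Fq: "\<forall>k>0. Fq k = (\<Sum>d\<in>{d. d dvd k}. q d)"
    and dp: "\<forall>k>0. k dvd p k" and dq: "\<forall>k>0. k dvd q k"
    and np: "\<exists>k>0. Fp k \<noteq> 0" and nq: "\<exists>k>0. Fq k \<noteq> 0"
  shows "\<forall>k>0. p k = q k"
proof -
  have step: "p k = q k \<or> k = 1" if k0: "k > 0"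
    and R: "(\<Sum>d\<in>{d. d dvd k \<and> d < k}. p d) = (\<Sum>d\<in>{d. d dvd k \<and> d < k}. q d)" for k
  proof -
    define R where "R = (\<Sum>d\<in>{d. d dvd k \<and> d < k}. p d)"
    have Fp': "Fp k = p k + R" using Fp k0 dsplit[OF k0, of p] R_def by simp
    have Fq': "Fq k = q k + R" using Fq k0 dsplit[OF k0, of q] R_def R by simp
    from sq_eq[OF eq[rule_format, OF k0]]
    show ?thesis
    proof
      assume "Fp k = Fq k" then show ?thesis using Fp' Fq' by simp
    next
      assume h: "Fp k \<le> 1 \<and> Fq k \<le> 1"
      show ?thesis
      proof (cases "k = 1")
        case False
        then have k2: "k \<ge> 2" using k0 by simp
        have "p k = 0"
        proof (rule ccontr)
          assume "p k \<noteq> 0"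
          then have "k \<le> p k" using dp k0 by (simp add: dvd_imp_le)
          then show False using h Fp' k2 by simp
        qed
        moreover have "q k = 0"
        proof (rule ccontr)
          assume "q k \<noteq> 0"
          then have "k \<le> q k" using dq k0 by (simp add: dvd_imp_le)
          then show False using h Fq' k2 by simp
        qed
        ultimately show ?thesis by simp
      qed simp
    qed
  qed
  have p1: "p 1 = q 1"
  proof (rule ccontr)
    assume ne: "p 1 \<noteq> q 1"
    have "Fp 1 = p 1" "Fq 1 = q 1" using Fp Fq by simp_all
    then have "p 1 \<le> 1 \<and> q 1 \<le> 1" using sq_eq[OF eq[rule_format, of 1]] ne by auto
    then have "(p 1 = 0 \<and> q 1 = 1) \<or> (q 1 = 0 \<and> p 1 = 1)" using ne by auto
    then show False
    proof
      assume "p 1 = 0 \<and> q 1 = 1"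
      then show False using nt_bad[OF eq Fp Fq dp dq np] by blast
    next
      assume "q 1 = 0 \<and> p 1 = 1"
      moreover have "\<forall>k>0. Fq k * Fq k - Fq k = Fp k * Fp k - Fp k" using eq by simp
      ultimately show False using nt_bad[OF _ Fq Fp dq dp nq] by blast
    qed
  qed
  have "0 < k \<longrightarrow> p k = q k" for k
  proof (induction k rule: less_induct)
    case (less k)
    show ?case
    proof
      assume k0: "0 < k"
      have "(\<Sum>d\<in>{d. d dvd k \<and> d < k}. p d) = (\<Sum>d\<in>{d. d dvd k \<and> d < k}. q d)"
        using less.IH k0 by (intro sum.cong) (auto intro: Nat.gr0I)
      then show "p k = q k" using step[OF k0] p1 by auto
    qed
  qed
  then show ?thesis by blast
qed


lemma conj_from_counts:
  assumes s: "\<sigma> permutes {1..n}" and t: "\<tau> permutes {1..n}"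
    and cnt: "\<forall>k. card {x\<in>{1..n}. per \<sigma> x = k} = card {x\<in>{1..n}. per \<tau> x = k}"
  shows "conj_Sn n \<sigma> \<tau>"
proof -
  define S where "S = {1..n::nat}"
  have fin: "finite S" unfolding S_def by simp
  have ps: "permutation \<sigma>" using s by (rule permutes_imp_permutation[rotated]) simp
  have pt: "permutation \<tau>" using t by (rule permutes_imp_permutation[rotated]) simp
  have invs: "\<forall>z. z\<in>S \<longleftrightarrow> \<sigma> z \<in> S" unfolding S_def using permutes_in_image[OF s] by simp
  have invt: "\<forall>z. z\<in>S \<longleftrightarrow> \<tau> z \<in> S" unfolding S_def using permutes_in_image[OF t] by simp
  have cnt': "\<forall>k. card {x\<in>S. per \<sigma> x = k} = card {y\<in>S. per \<tau> y = k}" using cnt unfolding S_def .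
  obtain h where h: "bij_betw h S S" "\<forall>x\<in>S. h (\<sigma> x) = \<tau> (h x)"
    using conj_build[OF ps pt fin fin invs invt cnt'] by blast
  define \<pi> where "\<pi> x = (if x \<in> S then h x else x)" for x
  have "bij_betw \<pi> S S" using h(1) by (rule bij_betw_cong[THEN iffD1, rotated]) (simp add: \<pi>_def)
  then have pp: "\<pi> permutes S" by (rule bij_imp_permutes) (simp add: \<pi>_def)
  have comm: "\<tau> (\<pi> x) = \<pi> (\<sigma> x)" for x
  proof (cases "x \<in> S")
    case True
    have hx: "h x \<in> S" by (rule bij_betw_apply[OF h(1) True])
    have sx: "\<sigma> x \<in> S" using invs True by blast
    show ?thesis using True hx sx h(2) unfolding \<pi>_def by simp
  next
    case False
    have "\<sigma> x = x" using permutes_not_in[OF s] False unfolding S_def by simp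
    moreover have "\<tau> x = x" using permutes_not_in[OF t] False unfolding S_def by simp
    ultimately show ?thesis using False unfolding \<pi>_def by simp
  qed
  have "\<tau> = \<pi> \<circ> \<sigma> \<circ> Hilbert_Choice.inv \<pi>"
  proof
    fix y
    have "\<tau> y = \<tau> (\<pi> (Hilbert_Choice.inv \<pi> y))" using permutes_inverses(1)[OF pp] by simp
    also have "\<dots> = \<pi> (\<sigma> (Hilbert_Choice.inv \<pi> y))" by (rule comm)
    finally show "\<tau> y = (\<pi> \<circ> \<sigma> \<circ> Hilbert_Choice.inv \<pi>) y" by simp
  qed
  then show ?thesis unfolding conj_Sn_def using pp unfolding S_def by blast
qed

lemma nonzero_fix:
  assumes ps: "permutation \<sigma>" and one: "(1::nat) \<in> {1..n}"
  shows "\<exists>k>0. card {x\<in>{1..n}. (\<sigma>^^k) x = x} \<noteq> 0"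
proof (intro exI conjI)
  show "per \<sigma> 1 > 0" by (rule per_pos[OF ps])
  have mem: "1 \<in> {x\<in>{1..n}. (\<sigma>^^(per \<sigma> 1)) x = x}" using one least_power_of_permutation(1)[OF ps] by simp
  have fin: "finite {x\<in>{1..n}. (\<sigma>^^(per \<sigma> 1)) x = x}" by simp
  show "card {x\<in>{1..n}. (\<sigma>^^(per \<sigma> 1)) x = x} \<noteq> 0" using mem fin by (auto simp: card_eq_0_iff)
qed

theorem mainTheorem10:
  fixes n :: nat and \<sigma> \<tau> :: "nat \<Rightarrow> nat"
  assumes "n \<ge> 2"
    and "\<sigma> permutes {1..n}" and "\<tau> permutes {1..n}"
    and "similar_mat (rho2 n \<sigma>) (rho2 n \<tau>)"
  shows "conj_Sn n \<sigma> \<tau>"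
proof -
  note s = assms(2) and t = assms(3)
  have ps: "permutation \<sigma>" using s by (rule permutes_imp_permutation[rotated]) simp
  have pt: "permutation \<tau>" using t by (rule permutes_imp_permutation[rotated]) simp
  have invs: "\<forall>z. z\<in>{1..n} \<longleftrightarrow> \<sigma> z \<in> {1..n}" using permutes_in_image[OF s] by simp
  have invt: "\<forall>z. z\<in>{1..n} \<longleftrightarrow> \<tau> z \<in> {1..n}" using permutes_in_image[OF t] by simp
  have finS: "finite {1..n::nat}" by simp
  define Fp where "Fp k = card {x\<in>{1..n}. (\<sigma>^^k) x = x}" for k
  define Fq where "Fq k = card {x\<in>{1..n}. (\<tau>^^k) x = x}" for k
  define p where "p d = card {x\<in>{1..n}. per \<sigma> x = d}" for d
  define q where "q d = card {x\<in>{1..n}. per \<tau> x = d}" for d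
  have eq: "\<forall>k>0. Fp k * Fp k - Fp k = Fq k * Fq k - Fq k"
  proof (intro allI impI)
    fix k :: nat
    have "mtr (rho2 n \<sigma> ^\<^sub>m k) = mtr (rho2 n \<tau> ^\<^sub>m k)" by (rule mtr_sim[OF assms(4)])
    moreover have "rho2 n \<sigma> ^\<^sub>m k = rho2 n (\<sigma>^^k)" by (rule rho2_pow[OF s])
    moreover have "rho2 n \<tau> ^\<^sub>m k = rho2 n (\<tau>^^k)" by (rule rho2_pow[OF t])
    ultimately have "mtr (rho2 n (\<sigma>^^k)) = mtr (rho2 n (\<tau>^^k))" by simp
    then have "(of_nat (Fp k * Fp k - Fp k) :: complex) = of_nat (Fq k * Fq k - Fq k)"
      unfolding mtr_rho2 Fp_def Fq_def .
    then show "Fp k * Fp k - Fp k = Fq k * Fq k - Fq k" by (simp only: of_nat_eq_iff)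
  qed
  have Fp: "\<forall>k>0. Fp k = (\<Sum>d\<in>{d. d dvd k}. p d)"
  proof (intro allI impI)
    fix k :: nat assume "k > 0"
    then show "Fp k = (\<Sum>d\<in>{d. d dvd k}. p d)" unfolding Fp_def p_def by (rule fix_count[OF ps finS])
  qed
  have Fq: "\<forall>k>0. Fq k = (\<Sum>d\<in>{d. d dvd k}. q d)"
  proof (intro allI impI)
    fix k :: nat assume "k > 0"
    then show "Fq k = (\<Sum>d\<in>{d. d dvd k}. q d)" unfolding Fq_def q_def by (rule fix_count[OF pt finS])
  qed
  have dp: "\<forall>k>0. k dvd p k" unfolding p_def using per_dvd_card[OF ps finS invs] by blast
  have dq: "\<forall>k>0. k dvd q k" unfolding q_def using per_dvd_card[OF pt finS invt] by blast
  have one: "(1::nat) \<in> {1..n}" using assms(1) by simp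
  have np: "\<exists>k>0. Fp k \<noteq> 0" unfolding Fp_def by (rule nonzero_fix[OF ps one])
  have nq: "\<exists>k>0. Fq k \<noteq> 0" unfolding Fq_def by (rule nonzero_fix[OF pt one])
  have pq: "\<forall>k>0. p k = q k" by (rule nt[OF eq Fp Fq dp dq np nq])
  have e0: "{x\<in>{1..n}. per \<sigma> x = 0} = {}" "{x\<in>{1..n}. per \<tau> x = 0} = {}"
    using per_pos[OF ps] per_pos[OF pt] by (metis (mono_tags, lifting) empty_Collect_eq less_irrefl)+
  have "p k = q k" for k
  proof (cases "k = 0")
    case True
    then show ?thesis unfolding p_def q_def by (simp only: True e0)
  next
    case False
    then show ?thesis using pq by simp
  qed
  then have "\<forall>k. card {x\<in>{1..n}. per \<sigma> x = k} = card {x\<in>{1..n}. per \<tau> x = k}"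
    unfolding p_def q_def by blast
  then show ?thesis by (rule conj_from_counts[OF s t])
qed

end
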